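(* Let $V=V(\alpha_1)\otimes\cdots\otimes V(\alpha_d)$ be a standard $U_q(\widehat{\mathfrak{sl}}_2)$-module with feasible diameter $d\ge1$. Let $\zeta_1$ be the scalar by which $LR$ acts on $U_0$ and $\zeta_1^\times$ the scalar by which $RL$ acts on $U_d$. Then (i) $\zeta_1=uu^*q^{-1}\sum_{i=1}^d\alpha_i+vv^*q^3\sum_{i=1}^d\alpha_i^{-1}-(q-q^{-1})(q^d-q^{-d})(bb^*q^{1-d}+cc^*q^{d-1})$; (ii) $\zeta_1^\times=uu^*q^{-1}\sum_{i=1}^d\alpha_i+vv^*q^3\sum_{i=1}^d\alpha_i^{-1}-(q-q^{-1})(q^d-q^{-d})(bb^*q^{d-1}+cc^*q^{1-d})$; (iii) $\zeta_1-\zeta_1^\times=(q-q^{-1})(q^{d-1}-q^{1-d})(q^d-q^{-d})(bb^*-cc^* )$.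
   Context: Let $\mathbb F$ be an algebraically closed field and fix nonzero $q\in\mathbb F$ with $q^2\ne1$; write $[n]_q=(q^n-q^{-n})/(q-q^{-1})$. $U_q(\widehat{\mathfrak{sl}}_2)$ is the associative unital $\mathbb F$-algebra with generators $e_i^{\pm},K_i^{\pm1}$ ($i\in\{0,1\}$) and relations $K_iK_i^{-1}=K_i^{-1}K_i=1$, $K_0K_1=K_1K_0$, $K_ie_i^{\pm}K_i^{-1}=q^{\pm2}e_i^{\pm}$, $K_ie_j^{\pm}K_i^{-1}=q^{\mp2}e_j^{\pm}$ ($i\ne j$), $e_i^+e_i^--e_i^-e_i^+=(K_i-K_i^{-1})/(q-q^{-1})$, $e_0^{\pm}e_1^{\mp}=e_1^{\mp}e_0^{\pm}$, and $(e_i^\pm)^3e_j^\pm-[3]_q(e_i^\pm)^2e_j^\pm e_i^\pm+[3]_qe_i^\pm e_j^\pm(e_i^\pm)^2-e_j^\pm(e_i^\pm)^3=0$ ($i\ne j$). Tensor products of modules are formed via $e_i^+(v\otimes w)=e_i^+v\otimes K_iw+v\otimes e_i^+w$, $e_i^-(v\otimes w)=e_i^-v\otimes w+K_i^{-1}v\otimes e_i^-w$, $K_i(v\otimes w)=K_iv\otimes K_iw$. For nonzero $\alpha\in\mathbb F$, $V(\alpha)$ is the module with basis $x,y$ and $K_1x=qx$, $K_1y=q^{-1}y$, $e_1^-x=y$, $e_1^-y=0$, $e_1^+x=0$, $e_1^+y=x$, $K_0x=q^{-1}x$, $K_0y=qy$, $e_0^-x=0$, $e_0^-y=q\alpha^{-1}x$,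 $e_0^+x=q^{-1}\alpha y$, $e_0^+y=0$. A standard module of diameter $d$ is $V(\alpha_1)\otimes\cdots\otimes V(\alpha_d)$ with all $\alpha_i\in\mathbb F$ nonzero. An integer $d$ is feasible if $d\ge0$ and $q^{2i}\ne1$ for $1\le i\le d$. For a standard $V$ of diameter $d$, $U_0$ is the $1$-dimensional span of $x\otimes\cdots\otimes x$ and $U_d$ the $1$-dimensional span of $y\otimes\cdots\otimes y$. Fix nonzero $b,c,b^*,c^*\in\mathbb F$ and $u,v,u^*,v^*\in\mathbb F$ with $uv^*=-bb^*q^{-1}(q-q^{-1})^2$ and $vu^*=-cc^*q^{-1}(q-q^{-1})^2$; set $R=ue_0^++ve_1^-K_1$ and $L=u^*e_1^++v^*e_0^-K_0$. ($LR$ maps $U_0$ into itself and $RL$ maps $U_d$ into itself.) *)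

theory Defs
  imports "HOL-Computational_Algebra.Polynomial"
begin

text \<open>Generators of U_q(affine sl2) acting on modules.
 Basis of V(alpha): True = x, False = y. A vector of a tensor product of d copies
 is a coefficient function on words (bool lists of length d).\<close>

datatype gen = E0p | E0m | E1p | E1m | K0 | K1 | K0i | K1i

definition delta :: "'b \<Rightarrow> 'b \<Rightarrow> 'a::field" where
  "delta b c = (if b = c then 1 else 0)"

fun single :: "'a::field \<Rightarrow> 'a \<Rightarrow> gen \<Rightarrow> bool \<Rightarrow> bool \<Rightarrow> 'a" where
  "single q a K1 b = (\<lambda>c. (if b then q else inverse q) * delta b c)"
| "single q a K1i b = (\<lambda>c. (if b then inverse q else q) * delta b c)"
| "single q a K0 b = (\<lambda>c. (if b then inverse q else q) * delta b c)"
| "single q a K0i b = (\<lambda>c. (if b then q else inverse q) * delta b c)"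
| "single q a E1m b = (if b then delta False else (\<lambda>_. 0))"
| "single q a E1p b = (if b then (\<lambda>_. 0) else delta True)"
| "single q a E0m b = (if b then (\<lambda>_. 0) else (\<lambda>c. q * inverse a * delta True c))"
| "single q a E0p b = (if b then (\<lambda>c. inverse q * a * delta False c) else (\<lambda>_. 0))"

definition tens :: "(bool \<Rightarrow> 'a::field) \<Rightarrow> (bool list \<Rightarrow> 'a) \<Rightarrow> bool list \<Rightarrow> 'a" where
  "tens v u w = (case w of [] \<Rightarrow> 0 | c # w' \<Rightarrow> v c * u w')"

definition kinv :: "gen \<Rightarrow> gen" where
  "kinv g = (case g of E0p \<Rightarrow> K0 | E0m \<Rightarrow> K0i | E1p \<Rightarrow> K1 | E1m \<Rightarrow> K1i | h \<Rightarrow> h)"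

text \<open>Action of generator g on the basis word w of V(a1) (x) (V(a2) (x) ... ), using
 the given coproduct; the empty tensor product is the trivial module
 (K_i act as 1, e_i act as 0).\<close>
fun act :: "'a::field \<Rightarrow> 'a list \<Rightarrow> gen \<Rightarrow> bool list \<Rightarrow> bool list \<Rightarrow> 'a" where
  "act q [] g [] = (if g \<in> {K0, K1, K0i, K1i} then delta [] else (\<lambda>_. 0))"
| "act q (a # as) g (b # w) =
     (if g \<in> {K0, K1, K0i, K1i} then tens (single q a g b) (act q as g w)
      else if g \<in> {E0p, E1p}
        then (\<lambda>w'. tens (single q a g b) (act q as (kinv g) w) w'
                 + tens (delta b) (act q as g w) w')
        else (\<lambda>w'. tens (single q a g b) (delta w) w'
                 + tens (single q a (kinv g) b) (act q as g w) w'))"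
| "act q _ g _ = (\<lambda>_. 0)"

definition lin :: "'a::field \<Rightarrow> 'a list \<Rightarrow> gen \<Rightarrow> (bool list \<Rightarrow> 'a) \<Rightarrow> bool list \<Rightarrow> 'a" where
  "lin q as g f = (\<lambda>w'. \<Sum>w\<in>{w. length w = length as}. f w * act q as g w w')"

definition Rop :: "'a::field \<Rightarrow> 'a list \<Rightarrow> 'a \<Rightarrow> 'a \<Rightarrow> (bool list \<Rightarrow> 'a) \<Rightarrow> bool list \<Rightarrow> 'a" where
  "Rop q as u v f = (\<lambda>w. u * lin q as E0p f w + v * lin q as E1m (lin q as K1 f) w)"

definition Lop :: "'a::field \<Rightarrow> 'a list \<Rightarrow> 'a \<Rightarrow> 'a \<Rightarrow> (bool list \<Rightarrow> 'a) \<Rightarrow> bool list \<Rightarrow> 'a" where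
  "Lop q as us vs f = (\<lambda>w. us * lin q as E1p f w + vs * lin q as E0m (lin q as K0 f) w)"

definition feasible :: "'a::field \<Rightarrow> nat \<Rightarrow> bool" where
  "feasible q d \<longleftrightarrow> (\<forall>i\<in>{1..d}. q ^ (2 * i) \<noteq> 1)"

end

theory Submission
  imports Defs
begin


lemma sum_len_Suc:
  "(\<Sum>w\<in>{w::bool list. length w = Suc n}. f w) =
   (\<Sum>w\<in>{w. length w = n}. f (True#w)) + (\<Sum>w\<in>{w. length w = n}. f (False#w))"
proof -
  let ?S = "{w::bool list. length w = n}"
  have e: "{w::bool list. length w = Suc n} = Cons True ` ?S \<union> Cons False ` ?S"
    by (auto simp: length_Suc_conv image_def)
  have fin: "finite ?S" using finite_lists_length_eq[of "UNIV::bool set" n] by simp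
  have "(\<Sum>w\<in>Cons True ` ?S \<union> Cons False ` ?S. f w) = (\<Sum>w\<in>Cons True ` ?S. f w) + (\<Sum>w\<in>Cons False ` ?S. f w)"
    by (rule sum.union_disjoint) (use fin in auto)
  also have "\<dots> = (\<Sum>w\<in>?S. f (True#w)) + (\<Sum>w\<in>?S. f (False#w))"
    by (simp add: sum.reindex)
  finally show ?thesis using e by simp
qed

definition cv :: "(bool list \<Rightarrow> 'a::field) \<Rightarrow> (bool list \<Rightarrow> 'a) \<Rightarrow> bool list \<Rightarrow> 'a" where
  "cv F1 F0 = (\<lambda>w. case w of [] \<Rightarrow> 0 | c # w' \<Rightarrow> if c then F1 w' else F0 w')"

lemma cv_simps[simp]: "cv F1 F0 [] = 0" "cv F1 F0 (True#w) = F1 w" "cv F1 F0 (False#w) = F0 w"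
  by (simp_all add: cv_def)

lemma act_nil_cons: "act q (a#as) g (b#w) [] = 0"
  by (simp add: tens_def)

lemma lin_nil_out: "lin q (a#as) g F [] = 0"
  by (simp add: lin_def sum_len_Suc act_nil_cons del: act.simps)

lemma lin_cons: "lin q (a#as) g F (c#w') =
   (\<Sum>w\<in>{w. length w = length as}. F (True#w) * act q (a#as) g (True#w) (c#w') + F (False#w) * act q (a#as) g (False#w) (c#w'))"
  by (simp add: lin_def sum_len_Suc sum.distrib)

lemma lin_K1: "lin q (a#as) K1 (cv F1 F0) = cv (\<lambda>w. q * lin q as K1 F1 w) (\<lambda>w. inverse q * lin q as K1 F0 w)"
proof (rule ext)
  fix w' show "lin q (a#as) K1 (cv F1 F0) w' = cv (\<lambda>w. q * lin q as K1 F1 w) (\<lambda>w. inverse q * lin q as K1 F0 w) w'"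
  proof (cases w')
    case Nil then show ?thesis by (simp only: lin_nil_out cv_simps)
  next
    case (Cons c w'') then show ?thesis
      by (cases c) (simp_all only: lin_cons, auto simp: tens_def delta_def lin_def sum_distrib_left mult_ac)
  qed
qed


lemma mult_if0: "(x::'a::field) * (if P then y else 0) = (if P then x * y else 0)" by simp

lemma fin_len: "finite {w::bool list. length w = n}"
  using finite_lists_length_eq[of "UNIV::bool set" n] by simp

lemma lin_K0: "lin q (a#as) K0 (cv F1 F0) = cv (\<lambda>w. inverse q * lin q as K0 F1 w) (\<lambda>w. q * lin q as K0 F0 w)"
proof (rule ext)
  fix w' show "lin q (a#as) K0 (cv F1 F0) w' = cv (\<lambda>w. inverse q * lin q as K0 F1 w) (\<lambda>w. q * lin q as K0 F0 w) w'"
  proof (cases w')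
    case Nil then show ?thesis by (simp only: lin_nil_out cv_simps)
  next
    case (Cons c w'') then show ?thesis
      by (cases c) (simp_all only: lin_cons, auto simp: tens_def delta_def lin_def sum_distrib_left mult_ac kinv_def sum.distrib if_distrib cong: if_cong)
  qed
qed

lemma lin_E0p: "lin q (a#as) E0p (cv F1 F0) = cv (\<lambda>w. lin q as E0p F1 w) (\<lambda>w. inverse q * a * lin q as K0 F1 w + lin q as E0p F0 w)"
proof (rule ext)
  fix w' show "lin q (a#as) E0p (cv F1 F0) w' = cv (\<lambda>w. lin q as E0p F1 w) (\<lambda>w. inverse q * a * lin q as K0 F1 w + lin q as E0p F0 w) w'"
  proof (cases w')
    case Nil then show ?thesis by (simp only: lin_nil_out cv_simps)
  next
    case (Cons c w'') then show ?thesis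
      by (cases c) (simp_all only: lin_cons, auto simp: tens_def delta_def lin_def sum_distrib_left mult_ac kinv_def sum.distrib if_distrib cong: if_cong)
  qed
qed

lemma lin_E1p: "lin q (a#as) E1p (cv F1 F0) = cv (\<lambda>w. lin q as K1 F0 w + lin q as E1p F1 w) (\<lambda>w. lin q as E1p F0 w)"
proof (rule ext)
  fix w' show "lin q (a#as) E1p (cv F1 F0) w' = cv (\<lambda>w. lin q as K1 F0 w + lin q as E1p F1 w) (\<lambda>w. lin q as E1p F0 w) w'"
  proof (cases w')
    case Nil then show ?thesis by (simp only: lin_nil_out cv_simps)
  next
    case (Cons c w'') then show ?thesis
      by (cases c) (simp_all only: lin_cons, auto simp: tens_def delta_def lin_def sum_distrib_left mult_ac kinv_def sum.distrib if_distrib cong: if_cong)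
  qed
qed

lemma lin_E0m: "lin q (a#as) E0m (cv F1 F0) = cv (\<lambda>w. q * inverse a * (if length w = length as then F0 w else 0) + q * lin q as E0m F1 w) (\<lambda>w. inverse q * lin q as E0m F0 w)"
proof (rule ext)
  fix w' show "lin q (a#as) E0m (cv F1 F0) w' = cv (\<lambda>w. q * inverse a * (if length w = length as then F0 w else 0) + q * lin q as E0m F1 w) (\<lambda>w. inverse q * lin q as E0m F0 w) w'"
  proof (cases w')
    case Nil then show ?thesis by (simp only: lin_nil_out cv_simps)
  next
    case (Cons c w'') then show ?thesis
      by (cases c) (simp_all only: lin_cons, simp_all add: tens_def lin_def kinv_def sum.distrib ring_distribs sum_distrib_left, simp_all add: delta_def mult_if0 sum.delta sum.delta' fin_len mult_ac)
  qed
qed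

lemma lin_E1m: "lin q (a#as) E1m (cv F1 F0) = cv (\<lambda>w. inverse q * lin q as E1m F1 w) (\<lambda>w. (if length w = length as then F1 w else 0) + q * lin q as E1m F0 w)"
proof (rule ext)
  fix w' show "lin q (a#as) E1m (cv F1 F0) w' = cv (\<lambda>w. inverse q * lin q as E1m F1 w) (\<lambda>w. (if length w = length as then F1 w else 0) + q * lin q as E1m F0 w) w'"
  proof (cases w')
    case Nil then show ?thesis by (simp only: lin_nil_out cv_simps)
  next
    case (Cons c w'') then show ?thesis
      by (cases c) (simp_all only: lin_cons, simp_all add: tens_def lin_def kinv_def sum.distrib ring_distribs sum_distrib_left, simp_all add: delta_def mult_if0 sum.delta sum.delta' fin_len mult_ac)
  qed
qed

lemma act_len: "length w = length as \<Longrightarrow> length w' \<noteq> length as \<Longrightarrow> act q as g w w' = 0"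
proof (induction as arbitrary: w w' g)
  case Nil then show ?case by (auto simp: delta_def)
next
  case (Cons a as)
  then obtain b w0 where w: "w = b # w0" "length w0 = length as" by (cases w) auto
  show ?case
  proof (cases w')
    case Nil then show ?thesis using w by (simp add: tens_def)
  next
    case (Cons c w1)
    then have "length w1 \<noteq> length as" using Cons.prems by simp
    then show ?thesis using w Cons Cons.IH[of w0 w1] by (auto simp: tens_def delta_def)
  qed
qed

lemma lin_supp: "length w' \<noteq> length as \<Longrightarrow> lin q as g F w' = 0"
  by (simp add: lin_def act_len)

lemma restr_lin[simp]: "(if length w = length as then lin q as g F w else 0) = lin q as g F w"
  using lin_supp by auto

lemma lin_scale[simp]: "lin q as g (\<lambda>w. k * F w) = (\<lambda>w. k * lin q as g F w)"
  by (simp add: lin_def sum_distrib_left mult_ac)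

lemma lin_zero[simp]: "lin q as g (\<lambda>w. 0) = (\<lambda>w. 0)"
  by (simp add: lin_def)

lemma lin_nil: "lin q [] g F = (\<lambda>w'. F [] * act q [] g [] w')"
proof -
  have "{w::bool list. length w = 0} = {[]}" by auto
  then show ?thesis by (simp add: lin_def)
qed

lemma cv_eqI: "G [] = 0 \<Longrightarrow> (\<And>w. G (True#w) = A w) \<Longrightarrow> (\<And>w. G (False#w) = B w) \<Longrightarrow> G = cv A B"
proof (rule ext)
  fix w assume "G [] = 0" "\<And>w. G (True#w) = A w" "\<And>w. G (False#w) = B w"
  then show "G w = cv A B w" by (cases w) (auto simp: cv_def split: bool.splits)
qed

lemma cv_scale: "(\<lambda>w. k * cv A B w) = cv (\<lambda>w. k * A w) (\<lambda>w. k * B w)"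
  by (rule cv_eqI) auto

lemma cv_scale_pt: "k * cv A B w = cv (\<lambda>w. k * A w) (\<lambda>w. k * B w) w"
  by (cases w) (auto simp: cv_def)

lemma Rop_cv: "q \<noteq> 0 \<Longrightarrow> Rop q (a#as) u v (cv F1 F0) = cv (Rop q as u v F1)
   (\<lambda>w. u * inverse q * a * lin q as K0 F1 w + v * q * lin q as K1 F1 w + Rop q as u v F0 w)"
  unfolding Rop_def lin_K1 lin_E0p lin_E1m lin_scale restr_lin
  by (rule cv_eqI) (auto simp: algebra_simps lin_supp)

lemma Lop_cv: "q \<noteq> 0 \<Longrightarrow> Lop q (a#as) us vs (cv F1 F0) = cv
   (\<lambda>w. Lop q as us vs F1 w + us * lin q as K1 F0 w + vs * q^2 * inverse a * lin q as K0 F0 w) (Lop q as us vs F0)"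
  unfolding Lop_def lin_K0 lin_E0m lin_E1p lin_scale restr_lin
  by (rule cv_eqI) (auto simp: algebra_simps power2_eq_square lin_supp)

lemma Rop_scale[simp]: "Rop q as u v (\<lambda>w. k * F w) = (\<lambda>w. k * Rop q as u v F w)"
  by (simp add: Rop_def algebra_simps)
lemma Lop_scale[simp]: "Lop q as u v (\<lambda>w. k * F w) = (\<lambda>w. k * Lop q as u v F w)"
  by (simp add: Lop_def algebra_simps)
lemma Rop_zero[simp]: "Rop q as u v (\<lambda>w. 0) = (\<lambda>w. 0)"
  by (simp add: Rop_def)
lemma Lop_zero[simp]: "Lop q as u v (\<lambda>w. 0) = (\<lambda>w. 0)"
  by (simp add: Lop_def)

lemma Lop_nil: "Lop q [] u v F = (\<lambda>w. 0)"
  by (simp add: Lop_def lin_nil)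
lemma Rop_nil: "Rop q [] u v F = (\<lambda>w. 0)"
  by (simp add: Rop_def lin_nil)

lemma X_cons: "delta (True # replicate n True) = cv (delta (replicate n True)) (\<lambda>w. 0)"
   "delta (False # replicate n False) = cv (\<lambda>w. 0) (delta (replicate n False))"
  by (rule cv_eqI; auto simp: delta_def)+

lemma cv_inj[simp]: "cv A B = cv C D \<longleftrightarrow> A = C \<and> B = D"
proof
  assume h: "cv A B = cv C D"
  have "A = C" proof fix w show "A w = C w" using fun_cong[OF h, of "True#w"] by simp qed
  moreover have "B = D" proof fix w show "B w = D w" using fun_cong[OF h, of "False#w"] by simp qed
  ultimately show "A = C \<and> B = D" ..
qed simp

lemma cv_zero[simp]: "cv (\<lambda>w. 0) (\<lambda>w. 0) = (\<lambda>w. 0)"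
  by (rule cv_eqI[symmetric]) auto

abbreviation XX where "XX as b \<equiv> delta (replicate (length as) b)"

lemma XK1: "lin q as K1 (XX as True) = (\<lambda>w. q ^ length as * XX as True w)"
proof (induction as)
  case Nil then show ?case by (auto simp: lin_nil delta_def)
next
  case (Cons a as) then show ?case by (simp add: X_cons lin_K1 cv_scale_pt mult.assoc)
qed

lemma XK0: "lin q as K0 (XX as True) = (\<lambda>w. inverse q ^ length as * XX as True w)"
proof (induction as)
  case Nil then show ?case by (auto simp: lin_nil delta_def)
next
  case (Cons a as) then show ?case by (simp add: X_cons lin_K0 cv_scale_pt mult.assoc)
qed

lemma YK1: "lin q as K1 (XX as False) = (\<lambda>w. inverse q ^ length as * XX as False w)"
proof (induction as)
  case Nil then show ?case by (auto simp: lin_nil delta_def)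
next
  case (Cons a as) then show ?case by (simp add: X_cons lin_K1 cv_scale_pt mult.assoc)
qed

lemma YK0: "lin q as K0 (XX as False) = (\<lambda>w. q ^ length as * XX as False w)"
proof (induction as)
  case Nil then show ?case by (auto simp: lin_nil delta_def)
next
  case (Cons a as) then show ?case by (simp add: X_cons lin_K0 cv_scale_pt mult.assoc)
qed

lemma XL: "q \<noteq> 0 \<Longrightarrow> Lop q as us vs (XX as True) = (\<lambda>w. 0)"
proof (induction as)
  case Nil then show ?case by (simp add: Lop_nil)
next
  case (Cons a as) then show ?case by (simp add: X_cons Lop_cv)
qed

lemma YR: "q \<noteq> 0 \<Longrightarrow> Rop q as u v (XX as False) = (\<lambda>w. 0)"
proof (induction as)
  case Nil then show ?case by (simp add: Rop_nil)
next
  case (Cons a as) then show ?case by (simp add: X_cons Rop_cv)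
qed

fun zr :: "'a::field \<Rightarrow> 'a \<Rightarrow> 'a \<Rightarrow> 'a \<Rightarrow> 'a \<Rightarrow> 'a list \<Rightarrow> 'a" where
  "zr q u v us vs [] = 0"
| "zr q u v us vs (a#as) = zr q u v us vs as + (u * inverse q * a * inverse q ^ length as + v * q * q ^ length as)
      * (us * q ^ length as + vs * q^2 * inverse a * inverse q ^ length as)"

fun zrx :: "'a::field \<Rightarrow> 'a \<Rightarrow> 'a \<Rightarrow> 'a \<Rightarrow> 'a \<Rightarrow> 'a list \<Rightarrow> 'a" where
  "zrx q u v us vs [] = 0"
| "zrx q u v us vs (a#as) = zrx q u v us vs as + (us * inverse q ^ length as + vs * q^2 * inverse a * q ^ length as)
      * (u * inverse q * a * q ^ length as + v * q * inverse q ^ length as)"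



lemma LR: "q \<noteq> 0 \<Longrightarrow> Lop q as us vs (Rop q as u v (XX as True)) = (\<lambda>w. zr q u v us vs as * XX as True w)"
proof (induction as)
  case Nil then show ?case by (simp add: Lop_nil)
next
  case (Cons a as)
  let ?X = "XX as True" and ?n = "length as"
  define k where "k = u * inverse q * a * inverse q ^ ?n + v * q * q ^ ?n"
  have r: "Rop q (a#as) u v (cv ?X (\<lambda>w. 0)) = cv (Rop q as u v ?X) (\<lambda>w. k * ?X w)"
    using Cons.prems by (simp add: Rop_cv XK0 XK1 k_def fun_eq_iff algebra_simps)
  have l: "Lop q (a#as) us vs (cv (Rop q as u v ?X) (\<lambda>w. k * ?X w)) =
     cv (\<lambda>w. (zr q u v us vs as + k * (us * q ^ ?n + vs * q^2 * inverse a * inverse q ^ ?n)) * ?X w) (\<lambda>w. 0)"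
    apply (subst Lop_cv[OF Cons.prems])
    apply (simp only: Lop_scale lin_scale XK0 XK1 XL[OF Cons.prems] Cons.IH[OF Cons.prems])
    apply (simp add: fun_eq_iff algebra_simps)
    done
  show ?case
    unfolding length_Cons replicate_Suc X_cons r l cv_scale by (simp add: k_def)
qed

lemma RL: "q \<noteq> 0 \<Longrightarrow> Rop q as u v (Lop q as us vs (XX as False)) = (\<lambda>w. zrx q u v us vs as * XX as False w)"
proof (induction as)
  case Nil then show ?case by (simp add: Rop_nil)
next
  case (Cons a as)
  let ?X = "XX as False" and ?n = "length as"
  define k where "k = us * inverse q ^ ?n + vs * q^2 * inverse a * q ^ ?n"
  have l: "Lop q (a#as) us vs (cv (\<lambda>w. 0) ?X) = cv (\<lambda>w. k * ?X w) (Lop q as us vs ?X)"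
    using Cons.prems by (simp add: Lop_cv YK0 YK1 k_def fun_eq_iff algebra_simps)
  have r: "Rop q (a#as) u v (cv (\<lambda>w. k * ?X w) (Lop q as us vs ?X)) =
     cv (\<lambda>w. 0) (\<lambda>w. (zrx q u v us vs as + k * (u * inverse q * a * q ^ ?n + v * q * inverse q ^ ?n)) * ?X w)"
    unfolding Rop_cv[OF Cons.prems] Rop_scale lin_scale YK0 YK1 YR[OF Cons.prems] Cons.IH[OF Cons.prems]
    by (simp add: fun_eq_iff algebra_simps)
  show ?case
    unfolding length_Cons replicate_Suc X_cons l r cv_scale by (simp add: k_def)
qed



definition zc :: "'a::field \<Rightarrow> 'a \<Rightarrow> 'a \<Rightarrow> 'a \<Rightarrow> 'a \<Rightarrow> 'a \<Rightarrow> 'a \<Rightarrow> 'a list \<Rightarrow> 'a" where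
  "zc q u v us vs bb cc as = u*us*inverse q*sum_list as + v*vs*q^3*sum_list (map inverse as)
     - (q - inverse q)*(q^length as - inverse q^length as)*(bb*q*inverse q^length as + cc*q^length as*inverse q)"

definition zcx :: "'a::field \<Rightarrow> 'a \<Rightarrow> 'a \<Rightarrow> 'a \<Rightarrow> 'a \<Rightarrow> 'a \<Rightarrow> 'a \<Rightarrow> 'a list \<Rightarrow> 'a" where
  "zcx q u v us vs bb cc as = u*us*inverse q*sum_list as + v*vs*q^3*sum_list (map inverse as)
     - (q - inverse q)*(q^length as - inverse q^length as)*(bb*q^length as*inverse q + cc*q*inverse q^length as)"

lemma alg1:
  fixes q P a u v us vs bb cc :: "'a::field"
  assumes "q \<noteq> 0" "P \<noteq> 0" "a \<noteq> 0"
    "u * vs = - bb * inverse q * (q - inverse q)\<^sup>2"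
    "v * us = - cc * inverse q * (q - inverse q)\<^sup>2"
  shows "(u * inverse q * a * inverse P + v * q * P) * (us * P + vs * q^2 * inverse a * inverse P)
     = u*us*inverse q*a + v*vs*q^3*inverse a
      - (q - inverse q)*((q*P - inverse q*inverse P)*(bb*q*(inverse q*inverse P) + cc*(q*P)*inverse q)
        - (P - inverse P)*(bb*q*inverse P + cc*P*inverse q))"
proof -
  have "(u * inverse q * a * inverse P + v * q * P) * (us * P + vs * q^2 * inverse a * inverse P)
     = u*us*inverse q*a + (u*vs)*q*(inverse P)^2 + (v*us)*q*P^2 + v*vs*q^3*inverse a"
    using assms(1-3) by (simp add: field_simps power2_eq_square power3_eq_cube)
  also have "\<dots> = u*us*inverse q*a + v*vs*q^3*inverse a
      - (q - inverse q)*((q*P - inverse q*inverse P)*(bb*q*(inverse q*inverse P) + cc*(q*P)*inverse q)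
        - (P - inverse P)*(bb*q*inverse P + cc*P*inverse q))"
    unfolding assms(4,5) using assms(1-3) by (simp add: field_simps power2_eq_square)
  finally show ?thesis .
qed

lemma alg2:
  fixes q P a u v us vs bb cc :: "'a::field"
  assumes "q \<noteq> 0" "P \<noteq> 0" "a \<noteq> 0"
    "u * vs = - bb * inverse q * (q - inverse q)\<^sup>2"
    "v * us = - cc * inverse q * (q - inverse q)\<^sup>2"
  shows "(us * inverse P + vs * q^2 * inverse a * P) * (u * inverse q * a * P + v * q * inverse P)
     = u*us*inverse q*a + v*vs*q^3*inverse a
      - (q - inverse q)*((q*P - inverse q*inverse P)*(bb*(q*P)*inverse q + cc*q*(inverse q*inverse P))
        - (P - inverse P)*(bb*P*inverse q + cc*q*inverse P))"
proof -
  have "(us * inverse P + vs * q^2 * inverse a * P) * (u * inverse q * a * P + v * q * inverse P)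
     = u*us*inverse q*a + (u*vs)*q*P^2 + (v*us)*q*(inverse P)^2 + v*vs*q^3*inverse a"
    using assms(1-3) by (simp add: field_simps power2_eq_square power3_eq_cube)
  also have "\<dots> = u*us*inverse q*a + v*vs*q^3*inverse a
      - (q - inverse q)*((q*P - inverse q*inverse P)*(bb*(q*P)*inverse q + cc*q*(inverse q*inverse P))
        - (P - inverse P)*(bb*P*inverse q + cc*q*inverse P))"
    unfolding assms(4,5) using assms(1-3) by (simp add: field_simps power2_eq_square)
  finally show ?thesis .
qed

lemma zr_zc:
  fixes q u v us vs bb cc :: "'a::field"
  assumes "q \<noteq> 0"
    "u * vs = - bb * inverse q * (q - inverse q)\<^sup>2"
    "v * us = - cc * inverse q * (q - inverse q)\<^sup>2"
  shows "\<forall>a\<in>set as. a \<noteq> 0 \<Longrightarrow> zr q u v us vs as = zc q u v us vs bb cc as"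
proof (induction as)
  case Nil then show ?case by (simp add: zc_def)
next
  case (Cons a as)
  have a: "a \<noteq> 0" using Cons.prems by simp
  have "zc q u v us vs bb cc (a#as) = zc q u v us vs bb cc as + (u*us*inverse q*a + v*vs*q^3*inverse a
      - (q - inverse q)*((q*q^length as - inverse q*inverse q^length as)*(bb*q*(inverse q*inverse q^length as) + cc*(q*q^length as)*inverse q)
        - (q^length as - inverse q^length as)*(bb*q*inverse q^length as + cc*q^length as*inverse q)))"
    by (simp add: zc_def algebra_simps)
  also have "\<dots> = zr q u v us vs (a#as)"
    using Cons alg1[OF assms(1) _ a assms(2,3), of "q^length as"] assms(1)
    by (simp add: power_inverse)
  finally show ?case by simp
qed

lemma zrx_zcx:
  fixes q u v us vs bb cc :: "'a::field"
  assumes "q \<noteq> 0"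
    "u * vs = - bb * inverse q * (q - inverse q)\<^sup>2"
    "v * us = - cc * inverse q * (q - inverse q)\<^sup>2"
  shows "\<forall>a\<in>set as. a \<noteq> 0 \<Longrightarrow> zrx q u v us vs as = zcx q u v us vs bb cc as"
proof (induction as)
  case Nil then show ?case by (simp add: zcx_def)
next
  case (Cons a as)
  have a: "a \<noteq> 0" using Cons.prems by simp
  have "zcx q u v us vs bb cc (a#as) = zcx q u v us vs bb cc as + (u*us*inverse q*a + v*vs*q^3*inverse a
      - (q - inverse q)*((q*q^length as - inverse q*inverse q^length as)*(bb*(q*q^length as)*inverse q + cc*q*(inverse q*inverse q^length as))
        - (q^length as - inverse q^length as)*(bb*q^length as*inverse q + cc*q*inverse q^length as)))"
    by (simp add: zcx_def algebra_simps)
  also have "\<dots> = zrx q u v us vs (a#as)"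
    using Cons alg2[OF assms(1) _ a assms(2,3), of "q^length as"] assms(1)
    by (simp add: power_inverse)
  finally show ?case by simp
qed

lemma powi_facts:
  fixes q :: "'a::field" assumes "q \<noteq> 0"
  shows "q powi int n = q^n" "q powi (- int n) = inverse q ^ n"
    "q powi (1 - int n) = q * inverse q ^ n" "q powi (int n - 1) = q ^ n * inverse q"
  using assms by (simp_all add: power_int_minus power_int_diff power_inverse divide_inverse)

theorem lemma7p17:
  fixes q b c bs cs u v us vs :: "'a::alg_closed_field"
    and as :: "'a list"
  assumes "q \<noteq> 0" and "q\<^sup>2 \<noteq> 1"
    and "b \<noteq> 0" and "c \<noteq> 0" and "bs \<noteq> 0" and "cs \<noteq> 0"
    and "u * vs = - b * bs * inverse q * (q - inverse q)\<^sup>2"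
    and "v * us = - c * cs * inverse q * (q - inverse q)\<^sup>2"
    and "\<forall>a\<in>set as. a \<noteq> 0"
    and "length as \<ge> 1" and "feasible q (length as)"
  defines "d \<equiv> int (length as)"
  defines "x0 \<equiv> delta (replicate (length as) True)"
    and "yd \<equiv> delta (replicate (length as) False)"
  defines "zeta1 \<equiv> u * us * inverse q * sum_list as + v * vs * q ^ 3 * sum_list (map inverse as)
            - (q - inverse q) * (q powi d - q powi (- d)) * (b * bs * q powi (1 - d) + c * cs * q powi (d - 1))"
    and "zeta1x \<equiv> u * us * inverse q * sum_list as + v * vs * q ^ 3 * sum_list (map inverse as)
            - (q - inverse q) * (q powi d - q powi (- d)) * (b * bs * q powi (d - 1) + c * cs * q powi (1 - d))"
  shows "Lop q as us vs (Rop q as u v x0) = (\<lambda>w. zeta1 * x0 w)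
       \<and> Rop q as u v (Lop q as us vs yd) = (\<lambda>w. zeta1x * yd w)
       \<and> zeta1 - zeta1x = (q - inverse q) * (q powi (d - 1) - q powi (1 - d)) * (q powi d - q powi (- d)) * (b * bs - c * cs)"
proof -
  have h1: "u * vs = - (b*bs) * inverse q * (q - inverse q)\<^sup>2" using assms(7) by simp
  have h2: "v * us = - (c*cs) * inverse q * (q - inverse q)\<^sup>2" using assms(8) by simp
  have z1: "zeta1 = zc q u v us vs (b*bs) (c*cs) as"
    unfolding zeta1_def zc_def d_def powi_facts[OF assms(1)] by (simp add: algebra_simps)
  have z2: "zeta1x = zcx q u v us vs (b*bs) (c*cs) as"
    unfolding zeta1x_def zcx_def d_def powi_facts[OF assms(1)] by (simp add: algebra_simps)
  have A: "Lop q as us vs (Rop q as u v x0) = (\<lambda>w. zeta1 * x0 w)"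
    unfolding x0_def LR[OF assms(1)] z1 zr_zc[OF assms(1) h1 h2 assms(9)] ..
  have B: "Rop q as u v (Lop q as us vs yd) = (\<lambda>w. zeta1x * yd w)"
    unfolding yd_def RL[OF assms(1)] z2 zrx_zcx[OF assms(1) h1 h2 assms(9)] ..
  have C: "zeta1 - zeta1x = (q - inverse q) * (q powi (d - 1) - q powi (1 - d)) * (q powi d - q powi (- d)) * (b * bs - c * cs)"
    unfolding zeta1_def zeta1x_def d_def powi_facts[OF assms(1)] by (simp add: algebra_simps)
  show ?thesis using A B C by blast
qed


end
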